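(* Let $\mathbf G_1$ and $\mathbf G_2$ be genera. Then $\mathrm{Gen}[\mathbf G_1\mathbf G_2](\mathbf y)=\mathrm{Gen}[\mathbf G_1](\mathbf y)\,\mathrm{Gen}[\mathbf G_2](\mathbf y)$.
   Context: **Category.** Let $\mathbf{Part}$ be the category whose objects are pairs $(S,\pi)$, with $S$ a finite set and $\pi$ a set partition of $S$. A morphism $(S,\pi)\to(S',\pi')$ is a bijection $f:S\to S'$ carrying the blocks of $\pi$ to the blocks of $\pi'$. **Genus.** A genus $\mathbf G$ is a functor from $\mathbf{Part}$ to the category of finite sets and bijections, with exactly one structure on the empty partition and at least one structure on the partition of a one-element set. The type of $\pi$ is the integer partition $\lambda$ listing its block sizes. The number $G_\lambda=|\mathbf G[\pi]|$ depends only on the type $\lambda$ of $\pi$. **Generating function.** It is $$\mathrm{Gen}[\mathbf G](\mathbf y)=\sum_{\lambda}G_\lambda\,\frac{m_\lambda(\mathbf y)}{\lambda!},\qquad \lambda!=\prod_i\lambda_i!,$$ where $m_\lambda$ is the monomial symmetric function in $\mathbf y=(y_1,y_2,\dots)$. **Product.** The product genus $\mathbf G_1\mathbf G_2$ assigns to $\pi\vdash S$ the set of quadruples $(S_1,S_2,A_1,A_2)$ such that: - $S_1,S_2$ are disjoint with $S_1\cup S_2=S$; - $A_i\in\mathbf G_i[\pi|_{S_i}]$, where $\pi|_{S_i}$ is the partition of $S_i$ formed by the nonempty intersections of the blocks of $\pi$ with $S_i$. *)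

theory Defs
  imports Complex_Main "HOL-Library.Disjoint_Sets" "HOL-Library.Multiset" "HOL-Library.Poly_Mapping"
begin

text \<open>Finite sets are taken to be finite subsets of nat; a set partition pi of S is a
  set of nonempty pairwise disjoint blocks with union S (so S is recovered as the union of pi).\<close>

definition is_part :: "nat set set \<Rightarrow> bool" where
  "is_part p \<longleftrightarrow> finite (\<Union>p) \<and> partition_on (\<Union>p) p"

definition part_mor :: "nat set set \<Rightarrow> nat set set \<Rightarrow> (nat \<Rightarrow> nat) \<Rightarrow> bool" where
  "part_mor p p' f \<longleftrightarrow> is_part p \<and> is_part p' \<and> bij_betw f (\<Union>p) (\<Union>p') \<and> (\<lambda>B. f ` B) ` p = p'"

text \<open>A functor from Part to finite sets: object part and morphism part (transport).\<close>
record 'b genus =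
  struct :: "nat set set \<Rightarrow> 'b set"
  transp :: "nat set set \<Rightarrow> (nat \<Rightarrow> nat) \<Rightarrow> 'b \<Rightarrow> 'b"

definition is_genus :: "'b genus \<Rightarrow> bool" where
  "is_genus G \<longleftrightarrow>
     (\<forall>p. is_part p \<longrightarrow> finite (struct G p)) \<and>
     (\<forall>p p' f. part_mor p p' f \<longrightarrow> transp G p f ` struct G p \<subseteq> struct G p') \<and>
     (\<forall>p f g. is_part p \<longrightarrow> (\<forall>x\<in>\<Union>p. f x = g x) \<longrightarrow>
        (\<forall>A\<in>struct G p. transp G p f A = transp G p g A)) \<and>
     (\<forall>p A. is_part p \<longrightarrow> A \<in> struct G p \<longrightarrow> transp G p id A = A) \<and>
     (\<forall>p p' p'' f g A. part_mor p p' f \<longrightarrow> part_mor p' p'' g \<longrightarrow> A \<in> struct G p \<longrightarrow>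
        transp G p (g \<circ> f) A = transp G p' g (transp G p f A)) \<and>
     card (struct G {}) = 1 \<and>
     (\<forall>x. struct G {{x}} \<noteq> {})"

definition ptype :: "nat set set \<Rightarrow> nat multiset" where
  "ptype p = image_mset card (mset_set p)"

definition int_parts :: "nat \<Rightarrow> nat multiset set" where
  "int_parts n = {l. set_mset l \<subseteq> {0<..} \<and> sum_mset l = n}"

text \<open>G_lambda = number of structures on a (any) partition of type lambda.\<close>
definition gcount :: "'b genus \<Rightarrow> nat multiset \<Rightarrow> nat" where
  "gcount G l = card (struct G (SOME p. is_part p \<and> ptype p = l))"

definition mfact :: "nat multiset \<Rightarrow> nat" where
  "mfact l = prod_mset (image_mset fact l)"

type_synonym fps_inf = "(nat \<Rightarrow>\<^sub>0 nat) \<Rightarrow> real"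

definition ps_mult :: "fps_inf \<Rightarrow> fps_inf \<Rightarrow> fps_inf" where
  "ps_mult A B a = (\<Sum>(b, c) \<in> {(b, c). b + c = a}. A b * B c)"

definition mdeg :: "(nat \<Rightarrow>\<^sub>0 nat) \<Rightarrow> nat" where
  "mdeg a = (\<Sum>i\<in>Poly_Mapping.keys a. Poly_Mapping.lookup a i)"

text \<open>Monomial symmetric function m_lambda: coefficient 1 at exactly those monomials
  whose multiset of nonzero exponents is lambda.\<close>
definition monsym :: "nat multiset \<Rightarrow> fps_inf" where
  "monsym l a = (if image_mset (Poly_Mapping.lookup a) (mset_set (Poly_Mapping.keys a)) = l then 1 else 0)"

text \<open>Gen[G] = sum over all integer partitions lambda of G_lambda m_lambda / lambda!;
  coefficientwise only partitions of the total degree contribute.\<close>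
definition Gen :: "'b genus \<Rightarrow> fps_inf" where
  "Gen G a = (\<Sum>l\<in>int_parts (mdeg a). real (gcount G l) * monsym l a / real (mfact l))"

definition prestr :: "nat set set \<Rightarrow> nat set \<Rightarrow> nat set set" where
  "prestr p T = (\<lambda>B. B \<inter> T) ` p - {{}}"

definition gprod :: "'b genus \<Rightarrow> 'c genus \<Rightarrow> (nat set \<times> nat set \<times> 'b \<times> 'c) genus" where
  "gprod G1 G2 =
     \<lparr> struct = (\<lambda>p. {(S1, S2, A1, A2). S1 \<inter> S2 = {} \<and> S1 \<union> S2 = \<Union>p \<and>
                        A1 \<in> struct G1 (prestr p S1) \<and> A2 \<in> struct G2 (prestr p S2)}),
       transp = (\<lambda>p f (S1, S2, A1, A2).
                   (f ` S1, f ` S2, transp G1 (prestr p S1) f A1, transp G2 (prestr p S2) f A2)) \<rparr>"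

end

theory Submission
  imports Defs "HOL-Library.Nat_Bijection"
begin


lemma mset_bij:
  assumes "finite A" "finite B" "image_mset f (mset_set A) = image_mset g (mset_set B)"
  shows "\<exists>h. bij_betw h A B \<and> (\<forall>x\<in>A. g (h x) = f x)"
  using assms
proof (induction A arbitrary: B rule: finite_induct)
  case empty
  then have "B = {}" by (metis image_mset_is_empty_iff mset_set.infinite mset_set_empty_iff)
  then show ?case by (simp add: bij_betw_def)
next
  case (insert x A)
  have "f x \<in># image_mset g (mset_set B)"
    using insert by (metis image_mset_add_mset mset_set.insert union_single_eq_member)
  then obtain y where y: "y \<in> B" "g y = f x" using insert by auto
  have "mset_set B = add_mset y (mset_set (B - {y}))"
    using y insert by (simp add: mset_set.remove)
  then have "image_mset f (mset_set A) = image_mset g (mset_set (B - {y}))"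
    using insert y by simp
  then obtain h0 where h0: "bij_betw h0 A (B - {y})" "\<forall>x\<in>A. g (h0 x) = f x"
    using insert by blast
  have b1: "bij_betw (h0(x:=y)) A (B - {y})"
    using h0(1) insert(2) by (metis bij_betw_cong fun_upd_other)
  have "bij_betw (h0(x:=y)) (A \<union> {x}) ((B - {y}) \<union> {y})"
    using notIn_Un_bij_betw3[of x A "h0(x:=y)" "B - {y}"] b1 insert(2) by simp
  then have "bij_betw (h0(x:=y)) (insert x A) B" using y by (simp add: insert_absorb)
  moreover have "\<forall>z\<in>insert x A. g ((h0(x:=y)) z) = f z" using h0 y insert(2) by auto
  ultimately show ?case by blast
qed

lemma is_part_prestr: assumes "is_part p" shows "is_part (prestr p S)"
proof -
  have f: "(\<lambda>B. B \<inter> S) = (\<inter>) S" by (auto simp: fun_eq_iff)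
  have "partition_on (S \<inter> \<Union>p) (prestr p S)"
    unfolding prestr_def f using assms partition_on_restrict unfolding is_part_def by blast
  moreover then have "\<Union>(prestr p S) = S \<inter> \<Union>p" using partition_onD1 by metis
  ultimately show ?thesis using assms unfolding is_part_def by simp
qed


lemma part_blk: "is_part p \<Longrightarrow> B \<in> p \<Longrightarrow> C \<in> p \<Longrightarrow> x \<in> B \<Longrightarrow> x \<in> C \<Longrightarrow> B = C"
  unfolding is_part_def partition_on_def disjoint_def by blast

lemma part_finite: assumes "is_part p" shows "finite p" "B \<in> p \<Longrightarrow> finite B" "B \<in> p \<Longrightarrow> B \<noteq> {}"
proof -
  have fu: "finite (\<Union>p)" using assms is_part_def by blast
  then show "finite p" using finite_UnionD by blast
  show "B \<in> p \<Longrightarrow> finite B" using fu by (meson Union_upper finite_subset)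
  show "B \<in> p \<Longrightarrow> B \<noteq> {}" using assms unfolding is_part_def partition_on_def by blast
qed

lemma part_mor_card_le:
  assumes G: "is_genus G" and m: "part_mor p p' f"
  shows "card (struct G p) \<le> card (struct G p')"
proof -
  have pp: "is_part p" "is_part p'" and bij: "bij_betw f (\<Union>p) (\<Union>p')"
    and img: "(\<lambda>B. f ` B) ` p = p'" using m unfolding part_mor_def by auto
  define g where "g = inv_into (\<Union>p) f"
  have bg: "bij_betw g (\<Union>p') (\<Union>p)" unfolding g_def using bij bij_betw_inv_into by blast
  have injf: "inj_on f (\<Union>p)" using bij bij_betw_def by blast
  have "(\<lambda>B. g ` B) ` p' = (\<lambda>B. g ` f ` B) ` p" using img by auto
  also have "\<dots> = p"
  proof -
    have "\<And>B. B \<in> p \<Longrightarrow> g ` f ` B = B" unfolding g_def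
      using injf by (simp add: Sup_upper inv_into_image_cancel)
    then show ?thesis by simp
  qed
  finally have m2: "part_mor p' p g" unfolding part_mor_def using pp bg by simp
  have inj: "inj_on (transp G p f) (struct G p)"
  proof (rule inj_on_inverseI)
    fix A assume A: "A \<in> struct G p"
    have "transp G p' g (transp G p f A) = transp G p (g \<circ> f) A"
      using G m m2 A unfolding is_genus_def by metis
    also have "\<dots> = transp G p id A"
    proof -
      have "\<forall>x\<in>\<Union>p. (g \<circ> f) x = id x" unfolding g_def using injf by simp
      then show ?thesis using G pp A unfolding is_genus_def by blast
    qed
    also have "\<dots> = A" using G pp A unfolding is_genus_def by blast
    finally show "transp G p' g (transp G p f A) = A" .
  qed
  have sub: "transp G p f ` struct G p \<subseteq> struct G p'" using G m unfolding is_genus_def by blast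
  have "finite (struct G p')" using G pp unfolding is_genus_def by blast
  then show ?thesis using card_inj_on_le[OF inj sub] by blast
qed

lemma iso_exists:
  assumes p: "is_part p" and p': "is_part p'" and t: "ptype p = ptype p'"
  shows "\<exists>f. part_mor p p' f"
proof -
  have fp: "finite p" using part_finite(1)[OF p] .
  have fp': "finite p'" using part_finite(1)[OF p'] .
  have tt: "image_mset card (mset_set p) = image_mset card (mset_set p')" using t unfolding ptype_def .
  have "\<exists>h. bij_betw h p p' \<and> (\<forall>B\<in>p. card (h B) = card B)"
    using mset_bij[OF fp fp' tt] .
  then obtain h where h: "bij_betw h p p'" "\<forall>B\<in>p. card (h B) = card B" by auto
  have hp: "B \<in> p \<Longrightarrow> h B \<in> p'" for B by (meson bij_betw_apply h(1))
  have ex: "\<forall>B\<in>p. \<exists>\<phi>. bij_betw \<phi> B (h B)"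
  proof
    fix B assume B: "B \<in> p"
    have f1: "finite B" using part_finite(2)[OF p B] .
    have f2: "finite (h B)" using part_finite(2)[OF p' hp[OF B]] .
    have c: "card B = card (h B)" using h(2) B by simp
    show "\<exists>\<phi>. bij_betw \<phi> B (h B)" using finite_same_card_bij[OF f1 f2 c] .
  qed
  from bchoice[OF ex] obtain \<Phi> where Phi: "\<forall>B\<in>p. bij_betw (\<Phi> B) B (h B)" ..
  define blk where "blk x = (THE B. B \<in> p \<and> x \<in> B)" for x
  have blk: "blk x = B" if B: "B \<in> p" and x: "x \<in> B" for B x
    unfolding blk_def
  proof (rule the_equality)
    show "B \<in> p \<and> x \<in> B" using B x by simp
    fix C assume "C \<in> p \<and> x \<in> C"
    then show "C = B" using part_blk[OF p, of C B x] B x by simp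
  qed
  define f where "f x = \<Phi> (blk x) x" for x
  have fB: "f ` B = h B" if B: "B \<in> p" for B
  proof -
    have "f ` B = \<Phi> B ` B" unfolding f_def
      by (rule image_cong) (simp_all add: blk[OF B])
    also have "\<dots> = h B" using Phi B bij_betw_imp_surj_on by metis
    finally show ?thesis .
  qed
  have "(\<lambda>B. f ` B) ` p = h ` p" by (rule image_cong) (simp_all add: fB)
  also have "\<dots> = p'" using h(1) by (simp add: bij_betw_def)
  finally have img: "(\<lambda>B. f ` B) ` p = p'" .
  have surj: "f ` \<Union>p = \<Union>p'"
  proof -
    have "f ` \<Union>p = \<Union>((\<lambda>B. f ` B) ` p)" by (rule image_Union)
    then show ?thesis using img by simp
  qed
  have inj: "inj_on f (\<Union>p)"
  proof (rule inj_onI)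
    fix x y assume x: "x \<in> \<Union>p" and y: "y \<in> \<Union>p" and e: "f x = f y"
    from x obtain B where B: "B \<in> p" "x \<in> B" by auto
    from y obtain C where C: "C \<in> p" "y \<in> C" by auto
    have fx: "f x \<in> h B" using fB[OF B(1)] B(2) by (metis imageI)
    have fy: "f y \<in> h C" using fB[OF C(1)] C(2) by (metis imageI)
    have "h B = h C" using part_blk[OF p' hp[OF B(1)] hp[OF C(1)] fx] fy e by simp
    then have BC: "B = C" using h(1) B(1) C(1) unfolding bij_betw_def inj_on_def by simp
    have "\<Phi> B x = \<Phi> B y" using e blk[OF B] blk[OF C] BC unfolding f_def by simp
    moreover have "inj_on (\<Phi> B) B" using Phi B(1) bij_betw_def by auto
    ultimately show "x = y" using B(2) C(2) BC by (simp add: inj_on_def)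
  qed
  have "bij_betw f (\<Union>p) (\<Union>p')" using inj surj by (simp add: bij_betw_def)
  then show ?thesis unfolding part_mor_def using p p' img by auto
qed

lemma card_struct_gcount:
  assumes G: "is_genus G" and q: "is_part q"
  shows "card (struct G q) = gcount G (ptype q)"
proof -
  define q' where "q' = (SOME p. is_part p \<and> ptype p = ptype q)"
  have q': "is_part q' \<and> ptype q' = ptype q" unfolding q'_def by (rule someI[of _ q]) (simp add: q)
  obtain f where f: "part_mor q q' f" using iso_exists q q' by metis
  obtain g where g: "part_mor q' q g" using iso_exists q q' by metis
  show ?thesis unfolding gcount_def q'_def[symmetric]
    using part_mor_card_le[OF G f] part_mor_card_le[OF G g] by simp
qed



definition lam :: "(nat \<Rightarrow>\<^sub>0 nat) \<Rightarrow> nat multiset" where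
  "lam a = image_mset (Poly_Mapping.lookup a) (mset_set (Poly_Mapping.keys a))"

lemma size_le_sum_pos: "set_mset M \<subseteq> {0<..} \<Longrightarrow> size M \<le> sum_mset (M::nat multiset)"
  by (induction M) auto

lemma mem_le_sum: "x \<in># M \<Longrightarrow> x \<le> sum_mset (M::nat multiset)"
  by (induction M) auto

lemma finite_int_parts: "finite (int_parts n)"
proof -
  have "int_parts n \<subseteq> (\<Union>m\<in>{0..n}. multisets_of_size {0..n} m)"
  proof
    fix M assume "M \<in> int_parts n"
    then have M: "set_mset M \<subseteq> {0<..}" "sum_mset M = n" unfolding int_parts_def by auto
    have "size M \<le> n" using size_le_sum_pos[OF M(1)] M(2) by simp
    moreover have "set_mset M \<subseteq> {0..n}" using mem_le_sum M(2) by fastforce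
    ultimately show "M \<in> (\<Union>m\<in>{0..n}. multisets_of_size {0..n} m)"
      unfolding multisets_of_size_def by auto
  qed
  moreover have "finite (\<Union>m\<in>{0..n}. multisets_of_size {0..n} m)" by auto
  ultimately show ?thesis using finite_subset by blast
qed

lemma lam_in: "lam a \<in> int_parts (mdeg a)"
  unfolding int_parts_def lam_def mdeg_def
  by (auto simp: sum_unfold_sum_mset in_keys_iff)

lemma Gen_eq: "Gen G a = real (gcount G (lam a)) / real (mfact (lam a))"
proof -
  have e: "(\<lambda>l. real (gcount G l) * monsym l a / real (mfact l))
      = (\<lambda>l. if l = lam a then real (gcount G l) / real (mfact l) else 0)"
    by (auto simp: fun_eq_iff monsym_def lam_def)
  show ?thesis unfolding Gen_def e using finite_int_parts lam_in by simp
qed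

lemma mfact_lam: "mfact (lam a) = (\<Prod>i\<in>Poly_Mapping.keys a. fact (Poly_Mapping.lookup a i))"
  unfolding mfact_def lam_def by (simp add: prod_unfold_prod_mset image_mset.compositionality comp_def)

lemma exists_part: "\<exists>p. is_part p \<and> ptype p = lam a"
proof -
  define E where "E i = (\<lambda>j. prod_encode (i,j)) ` {..<Poly_Mapping.lookup a i}" for i
  define p where "p = E ` Poly_Mapping.keys a"
  have fE: "finite (E i)" for i unfolding E_def by simp
  have cE: "card (E i) = Poly_Mapping.lookup a i" for i
    unfolding E_def by (subst card_image) (auto simp: inj_on_def prod_encode_eq)
  have dE: "i \<noteq> j \<Longrightarrow> E i \<inter> E j = {}" for i j
    unfolding E_def by (auto simp: prod_encode_eq)
  have nE: "i \<in> Poly_Mapping.keys a \<Longrightarrow> E i \<noteq> {}" for i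
    using cE[of i] by (auto simp: in_keys_iff)
  have injE: "inj_on E (Poly_Mapping.keys a)"
  proof (rule inj_onI)
    fix i j assume "i \<in> Poly_Mapping.keys a" "j \<in> Poly_Mapping.keys a" "E i = E j"
    then show "i = j" using dE[of i j] nE[of i] by auto
  qed
  have "finite (\<Union>p)" unfolding p_def using fE by simp
  moreover have "partition_on (\<Union>p) p"
  proof -
    have "disjoint p" unfolding disjoint_def p_def
    proof (intro ballI impI)
      fix A B assume "A \<in> E ` Poly_Mapping.keys a" "B \<in> E ` Poly_Mapping.keys a" "A \<noteq> B"
      then obtain i j where ij: "A = E i" "B = E j" "i \<noteq> j" by auto
      then show "A \<inter> B = {}" using dE by simp
    qed
    moreover have "{} \<notin> p" unfolding p_def using nE by (metis imageE)
    ultimately show ?thesis unfolding partition_on_def by simp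
  qed
  ultimately have "is_part p" unfolding is_part_def by simp
  moreover have "ptype p = lam a"
    unfolding ptype_def p_def lam_def
    using image_mset_mset_set[OF injE, symmetric]
    by (simp add: image_mset.compositionality comp_def cE)
  ultimately show ?thesis by blast
qed


lemma mf_pos: "mfact (lam x) > 0"
  unfolding mfact_lam by (rule prod_pos) simp

lemma mf_keys: assumes "Poly_Mapping.keys b \<subseteq> Poly_Mapping.keys a"
  shows "mfact (lam b) = (\<Prod>i\<in>Poly_Mapping.keys a. fact (Poly_Mapping.lookup b i))"
  unfolding mfact_lam
proof (rule prod.mono_neutral_left[OF finite_keys assms])
  show "\<forall>i\<in>Poly_Mapping.keys a - Poly_Mapping.keys b. fact (Poly_Mapping.lookup b i) = 1"
    by (simp add: in_keys_iff)
qed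

lemma mf_identity:
  assumes bc: "b + c = a"
  shows "(\<Prod>i\<in>Poly_Mapping.keys a. Poly_Mapping.lookup a i choose Poly_Mapping.lookup b i)
           * mfact (lam b) * mfact (lam c) = mfact (lam a)"
proof -
  have lb: "Poly_Mapping.lookup b i + Poly_Mapping.lookup c i = Poly_Mapping.lookup a i" for i
    using bc lookup_add by metis
  have kb: "Poly_Mapping.keys b \<subseteq> Poly_Mapping.keys a"
  proof (rule subsetI)
    fix i assume "i \<in> Poly_Mapping.keys b"
    then have "Poly_Mapping.lookup b i \<noteq> 0" by (simp add: in_keys_iff)
    then have "Poly_Mapping.lookup a i \<noteq> 0" using lb[of i] by linarith
    then show "i \<in> Poly_Mapping.keys a" by (simp add: in_keys_iff)
  qed
  have kc: "Poly_Mapping.keys c \<subseteq> Poly_Mapping.keys a"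
  proof (rule subsetI)
    fix i assume "i \<in> Poly_Mapping.keys c"
    then have "Poly_Mapping.lookup c i \<noteq> 0" by (simp add: in_keys_iff)
    then have "Poly_Mapping.lookup a i \<noteq> 0" using lb[of i] by linarith
    then show "i \<in> Poly_Mapping.keys a" by (simp add: in_keys_iff)
  qed
  have "(\<Prod>i\<in>Poly_Mapping.keys a. Poly_Mapping.lookup a i choose Poly_Mapping.lookup b i)
           * mfact (lam b) * mfact (lam c)
      = (\<Prod>i\<in>Poly_Mapping.keys a. (Poly_Mapping.lookup a i choose Poly_Mapping.lookup b i)
           * fact (Poly_Mapping.lookup b i) * fact (Poly_Mapping.lookup c i))"
    unfolding mf_keys[OF kb] mf_keys[OF kc] prod.distrib ..
  also have "\<dots> = (\<Prod>i\<in>Poly_Mapping.keys a. fact (Poly_Mapping.lookup a i))"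
  proof (rule prod.cong)
    fix i
    have "Poly_Mapping.lookup c i = Poly_Mapping.lookup a i - Poly_Mapping.lookup b i"
      "Poly_Mapping.lookup b i \<le> Poly_Mapping.lookup a i" using lb[of i] by auto
    then show "(Poly_Mapping.lookup a i choose Poly_Mapping.lookup b i)
           * fact (Poly_Mapping.lookup b i) * fact (Poly_Mapping.lookup c i) = fact (Poly_Mapping.lookup a i)"
      using binomial_fact_lemma[of "Poly_Mapping.lookup b i" "Poly_Mapping.lookup a i"]
      by (simp add: algebra_simps)
  qed simp
  also have "\<dots> = mfact (lam a)" unfolding mfact_lam ..
  finally show ?thesis .
qed

lemma genus_fin: assumes "is_genus G" "is_part p" shows "finite (struct G p)"
proof -
  have "\<forall>p. is_part p \<longrightarrow> finite (struct G p)" using assms(1) unfolding is_genus_def by (rule conjunct1)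
  then show ?thesis using assms(2) by simp
qed

lemma card_gprod:
  fixes G1 :: "'b genus" and G2 :: "'c genus"
  assumes G1: "is_genus G1" and G2: "is_genus G2" and q: "is_part q"
  shows "card (struct (gprod G1 G2) q)
    = (\<Sum>S\<in>Pow (\<Union>q). card (struct G1 (prestr q S)) * card (struct G2 (prestr q (\<Union>q - S))))"
proof -
  define \<Sigma> where "\<Sigma> = (SIGMA S:Pow (\<Union>q). struct G1 (prestr q S) \<times> struct G2 (prestr q (\<Union>q - S)))"
  define \<phi> where "\<phi> = (\<lambda>(S::nat set, A1::'b, A2::'c). (S, \<Union>q - S, A1, A2))"
  have eq: "struct (gprod G1 G2) q = \<phi> ` \<Sigma>"
  proof (rule set_eqI)
    fix x :: "nat set \<times> nat set \<times> 'b \<times> 'c"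
    obtain S1 S2 A1 A2 where x: "x = (S1, S2, A1, A2)" by (cases x) auto
    show "x \<in> struct (gprod G1 G2) q \<longleftrightarrow> x \<in> \<phi> ` \<Sigma>"
    proof
      assume "x \<in> struct (gprod G1 G2) q"
      then have h: "S1 \<inter> S2 = {}" "S1 \<union> S2 = \<Union>q" "A1 \<in> struct G1 (prestr q S1)" "A2 \<in> struct G2 (prestr q S2)"
        unfolding x gprod_def by auto
      then have "S2 = \<Union>q - S1" by auto
      then have "x = \<phi> (S1, A1, A2)" unfolding x \<phi>_def by simp
      moreover have "(S1, A1, A2) \<in> \<Sigma>" unfolding \<Sigma>_def using h \<open>S2 = \<Union>q - S1\<close> by auto
      ultimately show "x \<in> \<phi> ` \<Sigma>" by (rule image_eqI)
    next
      assume "x \<in> \<phi> ` \<Sigma>"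
      then obtain y where y: "y \<in> \<Sigma>" "x = \<phi> y" by auto
      obtain S B1 B2 where yy: "y = (S, B1, B2)" by (cases y) auto
      show "x \<in> struct (gprod G1 G2) q" using y unfolding yy \<Sigma>_def \<phi>_def gprod_def by auto
    qed
  qed
  have inj: "inj_on \<phi> \<Sigma>"
  proof (rule inj_onI)
    fix x y assume "\<phi> x = \<phi> y"
    then show "x = y" unfolding \<phi>_def
      by (cases x rule: prod_cases3, cases y rule: prod_cases3) simp
  qed
  have fin1: "finite (struct G1 (prestr q S))" for S
    using genus_fin[OF G1 is_part_prestr[OF q]] .
  have fin2: "finite (struct G2 (prestr q S))" for S
    using genus_fin[OF G2 is_part_prestr[OF q]] .
  have fU: "finite (Pow (\<Union>q))" using q unfolding is_part_def by simp
  have "card (struct (gprod G1 G2) q) = card \<Sigma>" unfolding eq using card_image[OF inj] .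
  also have "\<dots> = (\<Sum>S\<in>Pow (\<Union>q). card (struct G1 (prestr q S) \<times> struct G2 (prestr q (\<Union>q - S))))"
    unfolding \<Sigma>_def using fU fin1 fin2 by (simp add: card_SigmaI)
  also have "\<dots> = (\<Sum>S\<in>Pow (\<Union>q). card (struct G1 (prestr q S)) * card (struct G2 (prestr q (\<Union>q - S))))"
    by (simp add: card_cartesian_product)
  finally show ?thesis .
qed



context
  fixes q :: "nat set set" and a :: "nat \<Rightarrow>\<^sub>0 nat" and \<beta> :: "nat \<Rightarrow> nat set"
  assumes q: "is_part q" and b\<beta>: "bij_betw \<beta> (Poly_Mapping.keys a) q"
    and c\<beta>: "\<forall>i\<in>Poly_Mapping.keys a. card (\<beta> i) = Poly_Mapping.lookup a i"
begin

definition bS :: "nat set \<Rightarrow> nat \<Rightarrow>\<^sub>0 nat" where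
  "bS S = Abs_poly_mapping (\<lambda>i. if i \<in> Poly_Mapping.keys a then card (\<beta> i \<inter> S) else 0)"

lemma lookup_bS: "Poly_Mapping.lookup (bS S) = (\<lambda>i. if i \<in> Poly_Mapping.keys a then card (\<beta> i \<inter> S) else 0)"
  unfolding bS_def
proof (rule lookup_Abs_poly_mapping)
  have "{i. (if i \<in> Poly_Mapping.keys a then card (\<beta> i \<inter> S) else 0) \<noteq> 0} \<subseteq> Poly_Mapping.keys a"
    by (intro subsetI) (simp split: if_splits)
  then show "finite {i. (if i \<in> Poly_Mapping.keys a then card (\<beta> i \<inter> S) else 0) \<noteq> 0}"
    using finite_keys by (rule finite_subset)
qed

lemma qeq: "q = \<beta> ` Poly_Mapping.keys a"
  using b\<beta> bij_betw_imp_surj_on by metis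

lemma beta_in: "i \<in> Poly_Mapping.keys a \<Longrightarrow> \<beta> i \<in> q"
  unfolding qeq by (rule imageI)

lemma beta_fin: "i \<in> Poly_Mapping.keys a \<Longrightarrow> finite (\<beta> i)"
  using part_finite(2)[OF q beta_in] .

lemma beta_disj: "i \<in> Poly_Mapping.keys a \<Longrightarrow> j \<in> Poly_Mapping.keys a \<Longrightarrow> x \<in> \<beta> i \<Longrightarrow> x \<in> \<beta> j \<Longrightarrow> i = j"
proof -
  assume ij: "i \<in> Poly_Mapping.keys a" "j \<in> Poly_Mapping.keys a" and x: "x \<in> \<beta> i" "x \<in> \<beta> j"
  have "\<beta> i = \<beta> j" using part_blk[OF q beta_in[OF ij(1)] beta_in[OF ij(2)] x] .
  then show "i = j" using b\<beta> ij by (meson bij_betw_def inj_onD)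
qed

lemma Ueq: "\<Union>q = (\<Union>i\<in>Poly_Mapping.keys a. \<beta> i)"
  using qeq by simp

lemma keys_bS: "Poly_Mapping.keys (bS S) = {i \<in> Poly_Mapping.keys a. \<beta> i \<inter> S \<noteq> {}}"
proof -
  have "i \<in> Poly_Mapping.keys (bS S) \<longleftrightarrow> i \<in> Poly_Mapping.keys a \<and> \<beta> i \<inter> S \<noteq> {}" for i
  proof -
    have "i \<in> Poly_Mapping.keys (bS S) \<longleftrightarrow> Poly_Mapping.lookup (bS S) i \<noteq> 0" by (rule in_keys_iff)
    also have "\<dots> \<longleftrightarrow> i \<in> Poly_Mapping.keys a \<and> \<beta> i \<inter> S \<noteq> {}"
      unfolding lookup_bS using beta_fin[of i] by (auto simp: card_eq_0_iff)
    finally show ?thesis .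
  qed
  then show ?thesis by (simp add: set_eq_iff)
qed

lemma ptype_prestr: "ptype (prestr q S) = lam (bS S)"
proof -
  define K where "K = {i \<in> Poly_Mapping.keys a. \<beta> i \<inter> S \<noteq> {}}"
  have pe: "prestr q S = (\<lambda>i. \<beta> i \<inter> S) ` K"
  proof -
    have "prestr q S = (\<lambda>i. \<beta> i \<inter> S) ` Poly_Mapping.keys a - {{}}"
      unfolding prestr_def qeq image_image ..
    also have "\<dots> = (\<lambda>i. \<beta> i \<inter> S) ` K" unfolding K_def by auto
    finally show ?thesis .
  qed
  have inj: "inj_on (\<lambda>i. \<beta> i \<inter> S) K"
  proof (rule inj_onI)
    fix i j assume i: "i \<in> K" and j: "j \<in> K" and e: "\<beta> i \<inter> S = \<beta> j \<inter> S"
    from i obtain x where x: "x \<in> \<beta> i \<inter> S" unfolding K_def by auto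
    then have "x \<in> \<beta> j" using e by auto
    then show "i = j" using beta_disj[of i j x] i j x unfolding K_def by auto
  qed
  have "ptype (prestr q S) = image_mset card (image_mset (\<lambda>i. \<beta> i \<inter> S) (mset_set K))"
    unfolding ptype_def pe image_mset_mset_set[OF inj] ..
  also have "\<dots> = image_mset (\<lambda>i. card (\<beta> i \<inter> S)) (mset_set K)"
    by (simp add: image_mset.compositionality comp_def)
  also have "\<dots> = image_mset (Poly_Mapping.lookup (bS S)) (mset_set K)"
  proof (rule image_mset_cong)
    fix i assume "i \<in># mset_set K"
    then have "i \<in> Poly_Mapping.keys a" unfolding K_def
      by (metis (no_types, lifting) elem_mset_set empty_iff finite_set_mset_mset_set mem_Collect_eq mset_set.infinite set_mset_empty)
    then show "card (\<beta> i \<inter> S) = Poly_Mapping.lookup (bS S) i" by (simp add: lookup_bS)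
  qed
  also have "\<dots> = lam (bS S)" unfolding lam_def keys_bS K_def ..
  finally show ?thesis .
qed

lemma bS_add: assumes "S \<subseteq> \<Union>q" shows "bS S + bS (\<Union>q - S) = a"
proof (rule poly_mapping_eqI)
  fix i
  show "Poly_Mapping.lookup (bS S + bS (\<Union>q - S)) i = Poly_Mapping.lookup a i"
  proof (cases "i \<in> Poly_Mapping.keys a")
    case True
    have sub: "\<beta> i \<subseteq> \<Union>q" using beta_in[OF True] by (rule Union_upper)
    have "\<beta> i \<inter> (\<Union>q - S) = \<beta> i - S" using sub by auto
    then have "card (\<beta> i \<inter> S) + card (\<beta> i \<inter> (\<Union>q - S)) = card (\<beta> i)"
      using card_Int_Diff[OF beta_fin[OF True], of S] by simp
    then show ?thesis using True c\<beta> by (simp add: lookup_add lookup_bS)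
  next
    case False
    then show ?thesis by (simp add: lookup_add lookup_bS in_keys_iff)
  qed
qed


lemma fiber_card:
  assumes bc: "b + c = a"
  shows "card {S \<in> Pow (\<Union>q). (bS S, bS (\<Union>q - S)) = (b, c)}
       = (\<Prod>i\<in>Poly_Mapping.keys a. Poly_Mapping.lookup a i choose Poly_Mapping.lookup b i)"
proof -
  have lb: "Poly_Mapping.lookup b i + Poly_Mapping.lookup c i = Poly_Mapping.lookup a i" for i
    using bc lookup_add by metis
  define F' where "F' = {S \<in> Pow (\<Union>q). \<forall>i\<in>Poly_Mapping.keys a. card (\<beta> i \<inter> S) = Poly_Mapping.lookup b i}"
  have F: "{S \<in> Pow (\<Union>q). (bS S, bS (\<Union>q - S)) = (b, c)} = F'"
  proof (rule set_eqI, rule iffI)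
    fix S assume S: "S \<in> {S \<in> Pow (\<Union>q). (bS S, bS (\<Union>q - S)) = (b, c)}"
    then have e: "bS S = b" by simp
    have "\<forall>i\<in>Poly_Mapping.keys a. card (\<beta> i \<inter> S) = Poly_Mapping.lookup b i"
      unfolding e[symmetric] lookup_bS by simp
    then show "S \<in> F'" using S unfolding F'_def by simp
  next
    fix S assume S: "S \<in> F'"
    have e1: "bS S = b"
    proof (rule poly_mapping_eqI)
      fix i show "Poly_Mapping.lookup (bS S) i = Poly_Mapping.lookup b i"
      proof (cases "i \<in> Poly_Mapping.keys a")
        case True then show ?thesis using S unfolding F'_def by (simp add: lookup_bS)
      next
        case False then have "Poly_Mapping.lookup a i = 0" by (simp add: in_keys_iff)
        then show ?thesis using False lb[of i] by (simp add: lookup_bS)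
      qed
    qed
    have "S \<subseteq> \<Union>q" using S unfolding F'_def by simp
    then have "bS S + bS (\<Union>q - S) = b + c" using bS_add bc by simp
    then have "bS (\<Union>q - S) = c" using e1 by simp
    then show "S \<in> {S \<in> Pow (\<Union>q). (bS S, bS (\<Union>q - S)) = (b, c)}"
      using S e1 unfolding F'_def by simp
  qed
  define T where "T i = {X. X \<subseteq> \<beta> i \<and> card X = Poly_Mapping.lookup b i}" for i
  have key: "\<beta> i \<inter> (\<Union>j\<in>Poly_Mapping.keys a. Fn j) = Fn i"
    if Fn: "Fn \<in> PiE (Poly_Mapping.keys a) T" and i: "i \<in> Poly_Mapping.keys a" for Fn i
  proof -
    have sub: "j \<in> Poly_Mapping.keys a \<Longrightarrow> Fn j \<subseteq> \<beta> j" for j using Fn unfolding T_def by auto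
    show ?thesis
    proof
      show "Fn i \<subseteq> \<beta> i \<inter> (\<Union>j\<in>Poly_Mapping.keys a. Fn j)" using sub[OF i] i by auto
      show "\<beta> i \<inter> (\<Union>j\<in>Poly_Mapping.keys a. Fn j) \<subseteq> Fn i"
      proof
        fix x assume "x \<in> \<beta> i \<inter> (\<Union>j\<in>Poly_Mapping.keys a. Fn j)"
        then obtain j where j: "j \<in> Poly_Mapping.keys a" "x \<in> Fn j" "x \<in> \<beta> i" by auto
        then have "j = i" using beta_disj[of i j x] sub[OF j(1)] i by auto
        then show "x \<in> Fn i" using j by simp
      qed
    qed
  qed
  have bij: "bij_betw (\<lambda>S. restrict (\<lambda>i. \<beta> i \<inter> S) (Poly_Mapping.keys a)) F' (PiE (Poly_Mapping.keys a) T)"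
  proof (rule bij_betw_byWitness[where f' = "\<lambda>Fn. \<Union>i\<in>Poly_Mapping.keys a. Fn i"])
    show "\<forall>S\<in>F'. (\<Union>i\<in>Poly_Mapping.keys a. restrict (\<lambda>i. \<beta> i \<inter> S) (Poly_Mapping.keys a) i) = S"
    proof
      fix S assume "S \<in> F'" then have "S \<subseteq> \<Union>q" unfolding F'_def by simp
      then show "(\<Union>i\<in>Poly_Mapping.keys a. restrict (\<lambda>i. \<beta> i \<inter> S) (Poly_Mapping.keys a) i) = S"
        using Ueq by auto
    qed
    show "\<forall>Fn\<in>PiE (Poly_Mapping.keys a) T.
        restrict (\<lambda>i. \<beta> i \<inter> (\<Union>j\<in>Poly_Mapping.keys a. Fn j)) (Poly_Mapping.keys a) = Fn"
    proof
      fix Fn assume Fn: "Fn \<in> PiE (Poly_Mapping.keys a) T"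
      show "restrict (\<lambda>i. \<beta> i \<inter> (\<Union>j\<in>Poly_Mapping.keys a. Fn j)) (Poly_Mapping.keys a) = Fn"
      proof (rule ext)
        fix i show "restrict (\<lambda>i. \<beta> i \<inter> (\<Union>j\<in>Poly_Mapping.keys a. Fn j)) (Poly_Mapping.keys a) i = Fn i"
          using key[OF Fn, of i] Fn by (cases "i \<in> Poly_Mapping.keys a") (auto simp: PiE_def extensional_def)
      qed
    qed
    show "(\<lambda>S. restrict (\<lambda>i. \<beta> i \<inter> S) (Poly_Mapping.keys a)) ` F' \<subseteq> PiE (Poly_Mapping.keys a) T"
      unfolding T_def F'_def by auto
    show "(\<lambda>Fn. \<Union>i\<in>Poly_Mapping.keys a. Fn i) ` PiE (Poly_Mapping.keys a) T \<subseteq> F'"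
    proof
      fix S assume "S \<in> (\<lambda>Fn. \<Union>i\<in>Poly_Mapping.keys a. Fn i) ` PiE (Poly_Mapping.keys a) T"
      then obtain Fn where Fn: "Fn \<in> PiE (Poly_Mapping.keys a) T" and S: "S = (\<Union>i\<in>Poly_Mapping.keys a. Fn i)"
        by auto
      have "S \<subseteq> \<Union>q"
      proof
        fix x assume "x \<in> S"
        then obtain j where j: "j \<in> Poly_Mapping.keys a" "x \<in> Fn j" using S by auto
        then have "x \<in> \<beta> j" using Fn unfolding T_def by auto
        then show "x \<in> \<Union>q" using beta_in[OF j(1)] by auto
      qed
      moreover have "card (\<beta> i \<inter> S) = Poly_Mapping.lookup b i" if i: "i \<in> Poly_Mapping.keys a" for i
        using key[OF Fn i] Fn i unfolding S T_def by auto
      ultimately show "S \<in> F'" unfolding F'_def by simp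
    qed
  qed
  have "card F' = card (PiE (Poly_Mapping.keys a) T)" using bij_betw_same_card[OF bij] .
  also have "\<dots> = (\<Prod>i\<in>Poly_Mapping.keys a. card (T i))" by (simp add: card_PiE)
  also have "\<dots> = (\<Prod>i\<in>Poly_Mapping.keys a. Poly_Mapping.lookup a i choose Poly_Mapping.lookup b i)"
  proof (rule prod.cong)
    fix i assume i: "i \<in> Poly_Mapping.keys a"
    show "card (T i) = Poly_Mapping.lookup a i choose Poly_Mapping.lookup b i"
      unfolding T_def using n_subsets[OF beta_fin[OF i]] c\<beta> i by simp
  qed simp
  finally show ?thesis using F by simp
qed


lemma main_in_ctx:
  fixes G1 :: "'b genus" and G2 :: "'c genus"
  assumes G1: "is_genus G1" and G2: "is_genus G2" and t: "ptype q = lam a"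
  shows "real (card (struct (gprod G1 G2) q)) / real (mfact (lam a)) = ps_mult (Gen G1) (Gen G2) a"
proof -
  define U where "U = \<Union>q"
  define hh where "hh S = (bS S, bS (U - S))" for S
  define P where "P = {(b, c). b + c = a}"
  define H where "H y = real (gcount G1 (lam (fst y))) * real (gcount G2 (lam (snd y)))" for y
  have fU: "finite (Pow U)" using q unfolding is_part_def U_def by simp
  have hhP: "hh ` Pow U \<subseteq> P"
  proof
    fix y assume "y \<in> hh ` Pow U"
    then obtain S where S: "S \<subseteq> U" "y = hh S" by auto
    show "y \<in> P" unfolding P_def S(2) hh_def U_def using bS_add S(1) unfolding U_def by simp
  qed
  have fib: "card {S \<in> Pow U. hh S = (b, c)}
       = (\<Prod>i\<in>Poly_Mapping.keys a. Poly_Mapping.lookup a i choose Poly_Mapping.lookup b i)"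
    if bc: "b + c = a" for b c
    unfolding hh_def U_def using fiber_card[OF bc] .
  have Psub: "P \<subseteq> hh ` Pow U"
  proof
    fix y assume y: "y \<in> P"
    obtain b c where bc: "y = (b, c)" "b + c = a" using y unfolding P_def by auto
    have "(\<Prod>i\<in>Poly_Mapping.keys a. Poly_Mapping.lookup a i choose Poly_Mapping.lookup b i) > 0"
    proof (rule prod_pos)
      fix i
      have "Poly_Mapping.lookup b i \<le> Poly_Mapping.lookup a i"
        using bc(2) lookup_add[of b c i] by simp
      then show "Poly_Mapping.lookup a i choose Poly_Mapping.lookup b i > 0" by simp
    qed
    then have "{S \<in> Pow U. hh S = (b, c)} \<noteq> {}" using fib[OF bc(2)] by (metis card.empty less_irrefl)
    then obtain S where S: "S \<in> Pow U" "hh S = (b, c)" by blast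
    show "y \<in> hh ` Pow U" unfolding bc(1) using S by (metis imageI)
  qed
  have fP: "finite P" using finite_subset[OF Psub] fU by simp
  have mfa: "real (mfact (lam a)) > 0" using mf_pos by simp
  have "real (card (struct (gprod G1 G2) q)) / real (mfact (lam a))
      = (\<Sum>S\<in>Pow U. H (hh S) / real (mfact (lam a)))"
  proof -
    have "card (struct (gprod G1 G2) q)
        = (\<Sum>S\<in>Pow U. card (struct G1 (prestr q S)) * card (struct G2 (prestr q (U - S))))"
      unfolding U_def by (rule card_gprod[OF G1 G2 q])
    also have "\<dots> = (\<Sum>S\<in>Pow U. gcount G1 (lam (bS S)) * gcount G2 (lam (bS (U - S))))"
      using card_struct_gcount[OF G1 is_part_prestr[OF q]] card_struct_gcount[OF G2 is_part_prestr[OF q]]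
      by (simp add: ptype_prestr)
    finally have "real (card (struct (gprod G1 G2) q))
        = (\<Sum>S\<in>Pow U. H (hh S))" unfolding H_def hh_def by simp
    then show ?thesis by (simp add: sum_divide_distrib)
  qed
  also have "\<dots> = (\<Sum>y\<in>P. \<Sum>S\<in>{S \<in> Pow U. hh S = y}. H (hh S) / real (mfact (lam a)))"
    by (rule sum.group[symmetric, OF fU fP hhP])
  also have "\<dots> = (\<Sum>y\<in>P. Gen G1 (fst y) * Gen G2 (snd y))"
  proof (rule sum.cong)
    fix y assume y: "y \<in> P"
    obtain b c where bc: "y = (b, c)" "b + c = a" using y unfolding P_def by auto
    define cd where "cd = (\<Prod>i\<in>Poly_Mapping.keys a. Poly_Mapping.lookup a i choose Poly_Mapping.lookup b i)"
    have "(\<Sum>S\<in>{S \<in> Pow U. hh S = y}. H (hh S) / real (mfact (lam a)))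
        = (\<Sum>S\<in>{S \<in> Pow U. hh S = y}. H y / real (mfact (lam a)))" by simp
    also have "\<dots> = real cd * H y / real (mfact (lam a))"
      using fib[OF bc(2)] unfolding bc(1) cd_def by simp
    also have "\<dots> = Gen G1 (fst y) * Gen G2 (snd y)"
    proof -
      have "cd * mfact (lam b) * mfact (lam c) = mfact (lam a)" unfolding cd_def by (rule mf_identity[OF bc(2)])
      then have e: "real (mfact (lam a)) = real cd * real (mfact (lam b)) * real (mfact (lam c))"
        by (metis of_nat_mult)
      have p1: "real (mfact (lam b)) > 0" "real (mfact (lam c)) > 0" using mf_pos by simp_all
      have "real cd > 0" using e mfa p1 by (metis mult_eq_0_iff of_nat_0_less_iff gr0I less_irrefl of_nat_0)
      then show ?thesis unfolding e Gen_eq H_def bc(1) using p1 by (simp add: field_simps)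
    qed
    finally show "(\<Sum>S\<in>{S \<in> Pow U. hh S = y}. H (hh S) / real (mfact (lam a))) = Gen G1 (fst y) * Gen G2 (snd y)" .
  qed simp
  also have "\<dots> = ps_mult (Gen G1) (Gen G2) a"
    unfolding ps_mult_def P_def by (simp add: case_prod_beta)
  finally show ?thesis .
qed

end


theorem mainTheorem13:
  fixes G1 :: "'b genus" and G2 :: "'c genus"
  assumes "is_genus G1" and "is_genus G2"
  shows "Gen (gprod G1 G2) = ps_mult (Gen G1) (Gen G2)"
proof (rule ext)
  fix a
  define q where "q = (SOME p. is_part p \<and> ptype p = lam a)"
  have q: "is_part q \<and> ptype q = lam a" unfolding q_def using exists_part by (rule someI_ex)
  have e: "image_mset (Poly_Mapping.lookup a) (mset_set (Poly_Mapping.keys a)) = image_mset card (mset_set q)"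
    using q unfolding ptype_def lam_def by simp
  have "\<exists>h. bij_betw h (Poly_Mapping.keys a) q \<and> (\<forall>x\<in>Poly_Mapping.keys a. card (h x) = Poly_Mapping.lookup a x)"
    using mset_bij[OF finite_keys part_finite(1) e] q by simp
  then obtain \<beta> where b1: "bij_betw \<beta> (Poly_Mapping.keys a) q"
    and b2: "\<forall>x\<in>Poly_Mapping.keys a. card (\<beta> x) = Poly_Mapping.lookup a x" by auto
  have "Gen (gprod G1 G2) a = real (gcount (gprod G1 G2) (lam a)) / real (mfact (lam a))"
    by (rule Gen_eq)
  also have "gcount (gprod G1 G2) (lam a) = card (struct (gprod G1 G2) q)"
    unfolding gcount_def q_def ..
  also have "real (card (struct (gprod G1 G2) q)) / real (mfact (lam a)) = ps_mult (Gen G1) (Gen G2) a"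
    using q b1 b2 assms main_in_ctx by blast
  finally show "Gen (gprod G1 G2) a = ps_mult (Gen G1) (Gen G2) a" .
qed

end
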